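(* Let $b,c\in\mathbb{R}$ with $b,c>0$ and $b\neq c$, and let $a=(a_0,a_1,a_2,a_3)=(0,b,c,0)$. Then every tropical recurrent minimal sequence satisfying $a$ is periodic if and only if either $b<c\le 2b$ or $c<b\le 2c$. In this case every tropical recurrent minimal sequence satisfying $a$ is periodic with period $3$.
   Context: Here $n=3$. A tropical recurrent sequence is a sequence $y=(y_j)_{j\in\mathbb{Z}}$ with $y_j\in\mathbb{R}\cup\{\infty\}$, not all equal to $\infty$. It satisfies $a$ if for every $k\in\mathbb{Z}$ the minimum $\min_{0\le i\le 3}\{a_i+y_{i+k}\}$ is attained for at least two different indices $i$. It is minimal if for every $j\in\mathbb{Z}$ there exists $k$ with $j-3\le k\le j$ such that $a_{j-k}+y_j=\min_{0\le i\le 3}\{a_i+y_{i+k}\}$. The sequence is periodic with period $d\ge1$ if $y_{j+d}=y_j$ for all $j$, and periodic if it has some period $d\ge 1$. *)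

theory Defs
  imports "HOL-Library.Extended_Real"
begin

text \<open>Tropical recurrent sequences for n = 3. Values in R \<union> {\<infinity>} are modelled as
  extended reals different from -\<infinity>. The coefficient vector a = (a_0,...,a_3)
  is a function nat \<Rightarrow> real, of which only indices 0..3 are used.\<close>

definition trop_seq :: "(int \<Rightarrow> ereal) \<Rightarrow> bool" where
  "trop_seq y \<longleftrightarrow> (\<forall>j. y j \<noteq> -\<infinity>) \<and> (\<exists>j. y j \<noteq> \<infinity>)"

definition trop_min :: "(nat \<Rightarrow> real) \<Rightarrow> (int \<Rightarrow> ereal) \<Rightarrow> int \<Rightarrow> ereal" where
  "trop_min a y k = Min ((\<lambda>i. ereal (a i) + y (k + int i)) ` {0..3})"

definition satisfies :: "(nat \<Rightarrow> real) \<Rightarrow> (int \<Rightarrow> ereal) \<Rightarrow> bool" where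
  "satisfies a y \<longleftrightarrow> (\<forall>k::int. \<exists>i1 i2. i1 \<le> 3 \<and> i2 \<le> 3 \<and> i1 \<noteq> i2 \<and>
      ereal (a i1) + y (k + int i1) = trop_min a y k \<and>
      ereal (a i2) + y (k + int i2) = trop_min a y k)"

definition minimal :: "(nat \<Rightarrow> real) \<Rightarrow> (int \<Rightarrow> ereal) \<Rightarrow> bool" where
  "minimal a y \<longleftrightarrow> (\<forall>j::int. \<exists>k. j - 3 \<le> k \<and> k \<le> j \<and>
      ereal (a (nat (j - k))) + y j = trop_min a y k)"

definition has_period :: "(int \<Rightarrow> ereal) \<Rightarrow> int \<Rightarrow> bool" where
  "has_period y d \<longleftrightarrow> d \<ge> 1 \<and> (\<forall>j. y (j + d) = y j)"

definition periodic :: "(int \<Rightarrow> ereal) \<Rightarrow> bool" where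
  "periodic y \<longleftrightarrow> (\<exists>d. has_period y d)"

end

theory Submission
  imports Defs
begin


lemma trop_min_le:
  assumes "i \<le> 3"
  shows "trop_min a y k \<le> ereal (a i) + y (k + int i)"
  unfolding trop_min_def using assms by (intro Min_le) auto

lemma trop_min_in:
  "\<exists>i\<le>3. trop_min a y k = ereal (a i) + y (k + int i)"
proof -
  have "trop_min a y k \<in> (\<lambda>i. ereal (a i) + y (k + int i)) ` {0..3}"
    unfolding trop_min_def by (intro Min_in) auto
  then show ?thesis by auto
qed

lemma inf_window_back:
  assumes sat: "satisfies a y" and h: "\<forall>i\<le>3. y (k + int i) = \<infinity>"
  shows "y (k - 1) = \<infinity>"
proof -
  obtain i1 i2 where i: "i1 \<le> 3" "i2 \<le> 3" "i1 \<noteq> i2"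
    "ereal (a i1) + y (k - 1 + int i1) = trop_min a y (k-1)"
    "ereal (a i2) + y (k - 1 + int i2) = trop_min a y (k-1)"
    using sat unfolding satisfies_def by blast
  obtain i where ii: "1 \<le> i" "i \<le> 3" "ereal (a i) + y (k - 1 + int i) = trop_min a y (k-1)"
    using i by (metis One_nat_def less_one not_less)
  have "y (k - 1 + int i) = y (k + int (i - 1))" by (rule arg_cong[where f=y]) (use ii in arith)
  also have "\<dots> = \<infinity>" using h ii(2) by (meson diff_le_self le_trans)
  finally have "trop_min a y (k-1) = \<infinity>" using ii by simp
  moreover have "trop_min a y (k-1) \<le> ereal (a 0) + y (k - 1)"
    using trop_min_le[of 0 a y "k-1"] by simp
  ultimately show ?thesis by simp
qed

lemma inf_window_fwd:
  assumes sat: "satisfies a y" and h: "\<forall>i\<le>3. y (k + int i) = \<infinity>"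
  shows "y (k + 4) = \<infinity>"
proof -
  obtain i1 i2 where i: "i1 \<le> 3" "i2 \<le> 3" "i1 \<noteq> i2"
    "ereal (a i1) + y (k + 1 + int i1) = trop_min a y (k+1)"
    "ereal (a i2) + y (k + 1 + int i2) = trop_min a y (k+1)"
    using sat unfolding satisfies_def by blast
  obtain i where ii: "i \<le> 2" "ereal (a i) + y (k + 1 + int i) = trop_min a y (k+1)"
    using i by (metis le_antisym not_less_eq_eq numeral_2_eq_2 numeral_3_eq_3)
  have "y (k + 1 + int i) = y (k + int (i + 1))" using ii by (simp add: algebra_simps)
  also have "\<dots> = \<infinity>" using h ii(1) by (metis add_le_mono1 numeral_2_eq_2 numeral_3_eq_3 Suc_eq_plus1)
  finally have "trop_min a y (k+1) = \<infinity>" using ii by simp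
  moreover have "trop_min a y (k+1) \<le> ereal (a 3) + y (k + 1 + int 3)"
    using trop_min_le[of 3 a y "k+1"] by simp
  moreover have "k + 1 + int 3 = k + 4" by simp
  ultimately show ?thesis by (simp add: add.commute)
qed

lemma all_finite:
  assumes ts: "trop_seq y" and sat: "satisfies a y" and mn: "minimal a y"
  shows "y j \<noteq> \<infinity>"
proof
  assume yj: "y j = \<infinity>"
  obtain k where k: "j - 3 \<le> k" "k \<le> j" "ereal (a (nat (j - k))) + y j = trop_min a y k"
    using mn unfolding minimal_def by blast
  have tm: "trop_min a y k = \<infinity>" using k yj by simp
  have w0: "\<forall>i\<le>3. y (k + int i) = \<infinity>"
  proof (intro allI impI)
    fix i :: nat assume "i \<le> 3"
    then have "trop_min a y k \<le> ereal (a i) + y (k + int i)" by (rule trop_min_le)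
    then show "y (k + int i) = \<infinity>" using tm by (cases "y (k + int i)") auto
  qed
  have all: "\<forall>i\<le>3. y (k + int n + int i) = \<infinity> \<and> y (k - int n + int i) = \<infinity>" for n
  proof (induction n)
    case 0 then show ?case using w0 by simp
  next
    case (Suc n)
    have f: "\<forall>i\<le>3. y (k + int n + int i) = \<infinity>" and bk: "\<forall>i\<le>3. y (k - int n + int i) = \<infinity>"
      using Suc by auto
    have n1: "y (k + int n + 4) = \<infinity>" using inf_window_fwd[OF sat f] .
    have n2: "y (k - int n - 1) = \<infinity>" using inf_window_back[OF sat bk] .
    show ?case
    proof (intro allI impI conjI)
      fix i :: nat assume i: "i \<le> 3"
      show "y (k + int (Suc n) + int i) = \<infinity>"
      proof (cases "i = 3")
        case True then show ?thesis using n1 by (simp add: algebra_simps)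
      next
        case False
        then have "i + 1 \<le> 3" using i by simp
        then have "y (k + int n + int (i+1)) = \<infinity>" using f by blast
        then show ?thesis by (simp add: algebra_simps)
      qed
      show "y (k - int (Suc n) + int i) = \<infinity>"
      proof (cases "i = 0")
        case True then show ?thesis using n2 by (simp add: algebra_simps)
      next
        case False
        then have "i - 1 \<le> 3" using i by simp
        then have "y (k - int n + int (i-1)) = \<infinity>" using bk by blast
        then show ?thesis using False by (simp add: algebra_simps of_nat_diff)
      qed
    qed
  qed
  have "y m = \<infinity>" for m
  proof (cases "m \<ge> k")
    case True
    then have "m = k + int (nat (m - k)) + int 0" by simp
    then show ?thesis using all[of "nat (m-k)"] by (metis le0 zero_le_numeral)
  next
    case False
    then have "m = k - int (nat (k - m)) + int 0" by simp
    then show ?thesis using all[of "nat (k-m)"] by (metis le0 zero_le_numeral)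
  qed
  then show False using ts unfolding trop_seq_def by blast
qed



definition win4 :: "real \<Rightarrow> real \<Rightarrow> real \<Rightarrow> real \<Rightarrow> bool" where
 "win4 w0 w1 w2 w3 \<longleftrightarrow> (let m = min (min w0 w1) (min w2 w3) in
    (w0 = m \<and> w1 = m) \<or> (w0 = m \<and> w2 = m) \<or> (w0 = m \<and> w3 = m) \<or>
    (w1 = m \<and> w2 = m) \<or> (w1 = m \<and> w3 = m) \<or> (w2 = m \<and> w3 = m))"

definition m4 :: "real \<Rightarrow> real \<Rightarrow> real \<Rightarrow> real \<Rightarrow> real" where
 "m4 w0 w1 w2 w3 = min (min w0 w1) (min w2 w3)"

definition mm :: "(nat \<Rightarrow> real) \<Rightarrow> (int \<Rightarrow> real) \<Rightarrow> int \<Rightarrow> real" where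
 "mm a z k = m4 (a 0 + z k) (a 1 + z (k+1)) (a 2 + z (k+2)) (a 3 + z (k+3))"

definition zw :: "(nat \<Rightarrow> real) \<Rightarrow> (int \<Rightarrow> real) \<Rightarrow> int \<Rightarrow> bool" where
 "zw a z k = win4 (a 0 + z k) (a 1 + z (k+1)) (a 2 + z (k+2)) (a 3 + z (k+3))"

definition zm :: "(nat \<Rightarrow> real) \<Rightarrow> (int \<Rightarrow> real) \<Rightarrow> int \<Rightarrow> bool" where
 "zm a z j \<longleftrightarrow> a 0 + z j = mm a z j \<or> a 1 + z j = mm a z (j-1) \<or>
    a 2 + z j = mm a z (j-2) \<or> a 3 + z j = mm a z (j-3)"

lemma ex3: "(\<exists>i::nat. i \<le> 3 \<and> P i) \<longleftrightarrow> P 0 \<or> P 1 \<or> P 2 \<or> P 3"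
proof
  assume "\<exists>i::nat. i \<le> 3 \<and> P i"
  then obtain i where "i \<le> 3" "P i" by blast
  then have "i = 0 \<or> i = 1 \<or> i = 2 \<or> i = 3" by auto
  then show "P 0 \<or> P 1 \<or> P 2 \<or> P 3" using \<open>P i\<close> by auto
next
  assume "P 0 \<or> P 1 \<or> P 2 \<or> P 3"
  then show "\<exists>i::nat. i \<le> 3 \<and> P i"
    apply (elim disjE)
    apply (rule exI[where x=0]; simp)
    apply (rule exI[where x=1]; simp)
    apply (rule exI[where x=2]; simp)
    apply (rule exI[where x=3]; simp)
    done
qed

lemma ex4int: "(\<exists>k::int. j - 3 \<le> k \<and> k \<le> j \<and> P k) \<longleftrightarrow> P j \<or> P (j-1) \<or> P (j-2) \<or> P (j-3)"
proof
  assume "\<exists>k::int. j - 3 \<le> k \<and> k \<le> j \<and> P k"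
  then obtain k where "j - 3 \<le> k" "k \<le> j" "P k" by blast
  then have "k = j \<or> k = j-1 \<or> k = j-2 \<or> k = j-3" by auto
  then show "P j \<or> P (j-1) \<or> P (j-2) \<or> P (j-3)" using \<open>P k\<close> by auto
next
  assume "P j \<or> P (j-1) \<or> P (j-2) \<or> P (j-3)"
  then show "\<exists>k::int. j - 3 \<le> k \<and> k \<le> j \<and> P k"
    apply (elim disjE)
    apply (rule exI[where x=j]; simp)
    apply (rule exI[where x="j-1"]; simp)
    apply (rule exI[where x="j-2"]; simp)
    apply (rule exI[where x="j-3"]; simp)
    done
qed

lemma win_ex:
  fixes w :: "nat \<Rightarrow> real"
  shows "(\<exists>i1 i2. i1 \<le> 3 \<and> i2 \<le> 3 \<and> i1 \<noteq> i2 \<and> w i1 = m4 (w 0) (w 1) (w 2) (w 3) \<and> w i2 = m4 (w 0) (w 1) (w 2) (w 3))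
     \<longleftrightarrow> win4 (w 0) (w 1) (w 2) (w 3)"
proof -
  have "(\<exists>i1 i2. i1 \<le> 3 \<and> i2 \<le> 3 \<and> i1 \<noteq> i2 \<and> w i1 = m4 (w 0) (w 1) (w 2) (w 3) \<and> w i2 = m4 (w 0) (w 1) (w 2) (w 3))
    \<longleftrightarrow> (\<exists>i1. i1 \<le> 3 \<and> (\<exists>i2. i2 \<le> 3 \<and> i1 \<noteq> i2 \<and> w i1 = m4 (w 0) (w 1) (w 2) (w 3) \<and> w i2 = m4 (w 0) (w 1) (w 2) (w 3)))"
    by blast
  also have "\<dots> \<longleftrightarrow> win4 (w 0) (w 1) (w 2) (w 3)"
    unfolding ex3 win4_def Let_def m4_def by auto
  finally show ?thesis .
qed

lemma trop_min_real: "trop_min a (\<lambda>j. ereal (z j)) k = ereal (mm a z k)"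
proof -
  have s: "{0..3::nat} = {0,1,2,3}" by auto
  show ?thesis unfolding trop_min_def s mm_def m4_def
    by (simp add: min.assoc)
qed

lemma sat_iff: "satisfies a (\<lambda>j. ereal (z j)) \<longleftrightarrow> (\<forall>k. zw a z k)"
proof -
  have "satisfies a (\<lambda>j. ereal (z j)) \<longleftrightarrow> (\<forall>k. \<exists>i1. i1 \<le> 3 \<and> (\<exists>i2. i2 \<le> 3 \<and>
     i1 \<noteq> i2 \<and> a i1 + z (k + int i1) = mm a z k \<and> a i2 + z (k + int i2) = mm a z k))"
    unfolding satisfies_def trop_min_real by auto
  also have "\<dots> \<longleftrightarrow> (\<forall>k. zw a z k)"
  proof -
    have "(\<exists>i1. i1 \<le> 3 \<and> (\<exists>i2. i2 \<le> 3 \<and>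
     i1 \<noteq> i2 \<and> a i1 + z (k + int i1) = mm a z k \<and> a i2 + z (k + int i2) = mm a z k)) \<longleftrightarrow> zw a z k" for k
      using win_ex[of "\<lambda>i. a i + z (k + int i)"] unfolding zw_def mm_def by simp
    then show ?thesis by simp
  qed
  finally show ?thesis .
qed

lemma min_iff: "minimal a (\<lambda>j. ereal (z j)) \<longleftrightarrow> (\<forall>j. zm a z j)"
proof -
  have "minimal a (\<lambda>j. ereal (z j)) \<longleftrightarrow> (\<forall>j. \<exists>k. j - 3 \<le> k \<and> k \<le> j \<and>
     a (nat (j - k)) + z j = mm a z k)"
    unfolding minimal_def trop_min_real by auto
  also have "\<dots> \<longleftrightarrow> (\<forall>j. zm a z j)"
    unfolding ex4int zm_def by simp
  finally show ?thesis .
qed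

lemma coreA:
  fixes b c x0 x1 x2 x3 x4 x5 x6 :: real
  assumes "b > 0" "c > 0" "b \<le> 2*c" "c \<le> 2*b"
  and "win4 x1 (b+x2) (c+x3) x4" "win4 x2 (b+x3) (c+x4) x5" "win4 x3 (b+x4) (c+x5) x6"
  and "x3 = m4 x3 (b+x4) (c+x5) x6 \<or> b + x3 = m4 x2 (b+x3) (c+x4) x5 \<or>
       c + x3 = m4 x1 (b+x2) (c+x3) x4 \<or> x3 = m4 x0 (b+x1) (c+x2) x3"
  shows "x3 \<le> x6"
  using assms unfolding win4_def m4_def Let_def by (smt (z3))

lemma coreB:
  fixes b c x0 x1 x2 x3 x4 x5 x6 :: real
  assumes "b > 0" "c > 0" "b \<le> 2*c" "c \<le> 2*b"
  and "win4 x0 (b+x1) (c+x2) x3" "win4 x1 (b+x2) (c+x3) x4" "win4 x2 (b+x3) (c+x4) x5"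
  and "x3 = m4 x3 (b+x4) (c+x5) x6 \<or> b + x3 = m4 x2 (b+x3) (c+x4) x5 \<or>
       c + x3 = m4 x1 (b+x2) (c+x3) x4 \<or> x3 = m4 x0 (b+x1) (c+x2) x3"
  shows "x3 \<le> x0"
  using assms unfolding win4_def m4_def Let_def by (smt (z3))

lemma per3:
  fixes b c :: real and z :: "int \<Rightarrow> real"
  assumes bc: "b > 0" "c > 0" "b \<le> 2*c" "c \<le> 2*b"
  and a: "a = (\<lambda>i. [0, b, c, 0] ! i)"
  and W: "\<forall>k. zw a z k" and Mn: "\<forall>j. zm a z j"
  shows "z (k + 3) = z k"
proof -
  have a0: "a 0 = 0" "a 1 = b" "a 2 = c" "a 3 = 0" by (simp_all add: a)
  have e: "k - 3 + 1 = k - 2" "k - 3 + 2 = k - 1" "k - 3 + 3 = k"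
    "k - 2 + 1 = k - 1" "k - 2 + 2 = k" "k - 2 + 3 = k + 1"
    "k - 1 + 1 = k" "k - 1 + 2 = k + 1" "k - 1 + 3 = k + 2"
    "k + 3 - 1 = k + 2" "k + 3 - 2 = k + 1" "k + 3 - 3 = k"
    "k + 1 + 1 = k + 2" "k + 1 + 2 = k + 3" "k + 1 + 3 = k + 4"
    "k + 2 + 1 = k + 3" "k + 2 + 2 = k + 4" "k + 2 + 3 = k + 5"
    "k + 3 + 1 = k + 4" "k + 3 + 2 = k + 5" "k + 3 + 3 = k + 6"
    by simp_all
  have wm2: "win4 (z (k-2)) (b + z (k-1)) (c + z k) (z (k+1))"
    using W[rule_format, of "k-2"] unfolding zw_def a0 e by simp
  have wm1: "win4 (z (k-1)) (b + z k) (c + z (k+1)) (z (k+2))"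
    using W[rule_format, of "k-1"] unfolding zw_def a0 e by simp
  have w0: "win4 (z k) (b + z (k+1)) (c + z (k+2)) (z (k+3))"
    using W[rule_format, of "k"] unfolding zw_def a0 e by simp
  have w1: "win4 (z (k+1)) (b + z (k+2)) (c + z (k+3)) (z (k+4))"
    using W[rule_format, of "k+1"] unfolding zw_def a0 e by simp
  have w2: "win4 (z (k+2)) (b + z (k+3)) (c + z (k+4)) (z (k+5))"
    using W[rule_format, of "k+2"] unfolding zw_def a0 e by simp
  have m0: "z k = m4 (z k) (b + z (k+1)) (c + z (k+2)) (z (k+3)) \<or>
     b + z k = m4 (z (k-1)) (b + z k) (c + z (k+1)) (z (k+2)) \<or>
     c + z k = m4 (z (k-2)) (b + z (k-1)) (c + z k) (z (k+1)) \<or>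
     z k = m4 (z (k-3)) (b + z (k-2)) (c + z (k-1)) (z k)"
    using Mn[rule_format, of k] unfolding zm_def mm_def a0 e by simp
  have m3: "z (k+3) = m4 (z (k+3)) (b + z (k+4)) (c + z (k+5)) (z (k+6)) \<or>
     b + z (k+3) = m4 (z (k+2)) (b + z (k+3)) (c + z (k+4)) (z (k+5)) \<or>
     c + z (k+3) = m4 (z (k+1)) (b + z (k+2)) (c + z (k+3)) (z (k+4)) \<or>
     z (k+3) = m4 (z k) (b + z (k+1)) (c + z (k+2)) (z (k+3))"
    using Mn[rule_format, of "k+3"] unfolding zm_def mm_def a0 e by simp
  have "z k \<le> z (k+3)" by (rule coreA[OF bc wm2 wm1 w0 m0])
  moreover have "z (k+3) \<le> z k" by (rule coreB[OF bc w0 w1 w2 m3])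
  ultimately show ?thesis by simp
qed


definition pP :: "real \<Rightarrow> int \<Rightarrow> real" where
  "pP b r = (if r = 0 then 0 else if r = 1 then 2*b else b)"

definition cex :: "real \<Rightarrow> real \<Rightarrow> int \<Rightarrow> real" where
  "cex b c j = (if j = 1 \<or> j = 4 then c else if j = 2 then c - b else pP b (j mod 3))"

lemma pP_shift: "pP b ((k + int i) mod 3) = pP b ((k mod 3 + int i) mod 3)"
  by (simp add: mod_add_left_eq)

lemma per_win:
  assumes "b > 0" "c > 2*b" and a: "a = (\<lambda>i. [0, b, c, 0] ! i)"
  shows "zw a (\<lambda>j. pP b (j mod 3)) k"
proof -
  have r: "k mod 3 = 0 \<or> k mod 3 = 1 \<or> k mod 3 = 2" by auto
  have e: "(k + 1) mod 3 = (k mod 3 + 1) mod 3" "(k + 2) mod 3 = (k mod 3 + 2) mod 3"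
     "(k + 3) mod 3 = k mod 3" by (simp_all add: mod_add_left_eq)
  show ?thesis using r assms unfolding zw_def e
    by (auto simp: pP_def win4_def m4_def Let_def)
qed

lemma per_min:
  assumes "b > 0" "c > 2*b" and a: "a = (\<lambda>i. [0, b, c, 0] ! i)"
  shows "a 0 + pP b (j mod 3) = mm a (\<lambda>j. pP b (j mod 3)) j"
proof -
  have r: "j mod 3 = 0 \<or> j mod 3 = 1 \<or> j mod 3 = 2" by auto
  have e: "(j + 1) mod 3 = (j mod 3 + 1) mod 3" "(j + 2) mod 3 = (j mod 3 + 2) mod 3"
     "(j + 3) mod 3 = j mod 3" by (simp_all add: mod_add_left_eq)
  show ?thesis using r assms unfolding mm_def e
    by (auto simp: pP_def m4_def)
qed

lemma cex_far: "j \<notin> {1,2,4} \<Longrightarrow> cex b c j = pP b (j mod 3)"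
  unfolding cex_def by auto

lemma zw_cong:
  assumes "\<And>i. i \<le> 3 \<Longrightarrow> z (k + int i) = z' (k + int i)"
  shows "zw a z k = zw a z' k"
  using assms[of 0] assms[of 1] assms[of 2] assms[of 3] unfolding zw_def by simp

lemma mm_cong:
  assumes "\<And>i. i \<le> 3 \<Longrightarrow> z (k + int i) = z' (k + int i)"
  shows "mm a z k = mm a z' k"
  using assms[of 0] assms[of 1] assms[of 2] assms[of 3] unfolding mm_def by simp

lemma cex_win:
  assumes b: "b > 0" and c: "c > 2*b" and a: "a = (\<lambda>i. [0, b, c, 0] ! i)"
  shows "zw a (cex b c) k"
proof (cases "k \<le> -3 \<or> k \<ge> 5")
  case True
  have "zw a (cex b c) k = zw a (\<lambda>j. pP b (j mod 3)) k"
    by (rule zw_cong) (use True in \<open>auto intro!: cex_far\<close>)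
  then show ?thesis using per_win[OF b c a] by simp
next
  case False
  then have "k = -2 \<or> k = -1 \<or> k = 0 \<or> k = 1 \<or> k = 2 \<or> k = 3 \<or> k = 4" by auto
  then show ?thesis using b c unfolding a zw_def
    by (elim disjE; simp add: cex_def pP_def win4_def m4_def Let_def)
qed

lemma cex_min:
  assumes b: "b > 0" and c: "c > 2*b" and a: "a = (\<lambda>i. [0, b, c, 0] ! i)"
  shows "zm a (cex b c) j"
proof (cases "j \<le> -3 \<or> j \<ge> 8")
  case True
  have "mm a (cex b c) j = mm a (\<lambda>j. pP b (j mod 3)) j"
    by (rule mm_cong) (use True in \<open>auto intro!: cex_far\<close>)
  moreover have "cex b c j = pP b (j mod 3)" using True by (auto intro!: cex_far)
  ultimately show ?thesis using per_min[OF b c a, of j] unfolding zm_def by simp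
next
  case False
  then have "j = -2 \<or> j = -1 \<or> j = 0 \<or> j = 1 \<or> j = 2 \<or> j = 3 \<or> j = 4 \<or> j = 5 \<or> j = 6 \<or> j = 7" by presburger
  then show ?thesis using b c unfolding a zm_def mm_def
    by (elim disjE; simp add: cex_def pP_def m4_def)
qed

lemma period_iter:
  assumes "has_period y d"
  shows "y (j + int n * d) = y j"
proof (induction n)
  case 0 then show ?case by simp
next
  case (Suc n)
  have "y (j + int (Suc n) * d) = y ((j + int n * d) + d)" by (simp add: algebra_simps)
  also have "\<dots> = y (j + int n * d)" using assms unfolding has_period_def by blast
  finally show ?case using Suc by simp
qed

lemma cex_nonper:
  assumes b: "b > 0" and c: "c > 2*b"
  shows "\<not> periodic (\<lambda>j. ereal (cex b c j))"
proof
  assume "periodic (\<lambda>j. ereal (cex b c j))"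
  then obtain d where d: "has_period (\<lambda>j. ereal (cex b c j)) d" unfolding periodic_def by blast
  then have d1: "d \<ge> 1" unfolding has_period_def by simp
  have "ereal (cex b c (1 + int 6 * d)) = ereal (cex b c 1)"
    using period_iter[OF d, of 1 6] by simp
  moreover have "cex b c (1 + int 6 * d) = 2 * b"
  proof -
    have "(1 + int 6 * d) mod 3 = 1" by presburger
    moreover have "1 + int 6 * d \<notin> {1,2,4}" using d1 by auto
    ultimately show ?thesis using cex_far[of "1 + int 6 * d" b c] by (simp add: pP_def)
  qed
  moreover have "cex b c 1 = c" by (simp add: cex_def)
  ultimately show False using c by simp
qed

definition qP :: "real \<Rightarrow> int \<Rightarrow> real" where
  "qP c r = (if r = 0 then 0 else if r = 1 then c else 2*c)"

definition cex2 :: "real \<Rightarrow> real \<Rightarrow> int \<Rightarrow> real" where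
  "cex2 b c j = (if j = -1 \<or> j = -4 then b else if j = -2 then b - c else qP c (j mod 3))"

lemma per_win2:
  assumes "c > 0" "b > 2*c" and a: "a = (\<lambda>i. [0, b, c, 0] ! i)"
  shows "zw a (\<lambda>j. qP c (j mod 3)) k"
proof -
  have r: "k mod 3 = 0 \<or> k mod 3 = 1 \<or> k mod 3 = 2" by auto
  have e: "(k + 1) mod 3 = (k mod 3 + 1) mod 3" "(k + 2) mod 3 = (k mod 3 + 2) mod 3"
     "(k + 3) mod 3 = k mod 3" by (simp_all add: mod_add_left_eq)
  show ?thesis using r assms unfolding zw_def e
    by (auto simp: qP_def win4_def m4_def Let_def)
qed

lemma per_min2:
  assumes "c > 0" "b > 2*c" and a: "a = (\<lambda>i. [0, b, c, 0] ! i)"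
  shows "a 3 + qP c (j mod 3) = mm a (\<lambda>j. qP c (j mod 3)) (j - 3)"
proof -
  have r: "j mod 3 = 0 \<or> j mod 3 = 1 \<or> j mod 3 = 2" by auto
  have e: "(j - 3 + 1) mod 3 = (j mod 3 + 1) mod 3" "(j - 3 + 2) mod 3 = (j mod 3 + 2) mod 3"
     "(j - 3 + 3) mod 3 = j mod 3" "(j - 3) mod 3 = j mod 3"
    by presburger+
  show ?thesis using r assms unfolding mm_def e
    by (auto simp: qP_def m4_def)
qed

lemma cex2_far: "j \<notin> {-1,-2,-4} \<Longrightarrow> cex2 b c j = qP c (j mod 3)"
  unfolding cex2_def by auto

lemma cex2_win:
  assumes c: "c > 0" and b: "b > 2*c" and a: "a = (\<lambda>i. [0, b, c, 0] ! i)"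
  shows "zw a (cex2 b c) k"
proof (cases "k \<le> -8 \<or> k \<ge> 0")
  case True
  have "zw a (cex2 b c) k = zw a (\<lambda>j. qP c (j mod 3)) k"
    by (rule zw_cong) (use True in \<open>auto intro!: cex2_far\<close>)
  then show ?thesis using per_win2[OF c b a] by simp
next
  case False
  then have "k = -7 \<or> k = -6 \<or> k = -5 \<or> k = -4 \<or> k = -3 \<or> k = -2 \<or> k = -1" by presburger
  then show ?thesis using b c unfolding a zw_def
    by (elim disjE; simp add: cex2_def qP_def win4_def m4_def Let_def)
qed

lemma cex2_min:
  assumes c: "c > 0" and b: "b > 2*c" and a: "a = (\<lambda>i. [0, b, c, 0] ! i)"
  shows "zm a (cex2 b c) j"
proof (cases "j \<le> -8 \<or> j \<ge> 3")
  case True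
  have "mm a (cex2 b c) (j-3) = mm a (\<lambda>j. qP c (j mod 3)) (j-3)"
    by (rule mm_cong) (use True in \<open>auto intro!: cex2_far\<close>)
  moreover have "cex2 b c j = qP c (j mod 3)" using True by (auto intro!: cex2_far)
  ultimately show ?thesis using per_min2[OF c b a, of j] unfolding zm_def by simp
next
  case False
  then have "j = -7 \<or> j = -6 \<or> j = -5 \<or> j = -4 \<or> j = -3 \<or> j = -2 \<or> j = -1 \<or> j = 0 \<or> j = 1 \<or> j = 2" by presburger
  then show ?thesis using b c unfolding a zm_def mm_def
    by (elim disjE; simp add: cex2_def qP_def m4_def)
qed

lemma cex2_nonper:
  assumes c: "c > 0" and b: "b > 2*c"
  shows "\<not> periodic (\<lambda>j. ereal (cex2 b c j))"
proof
  assume "periodic (\<lambda>j. ereal (cex2 b c j))"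
  then obtain d where d: "has_period (\<lambda>j. ereal (cex2 b c j)) d" unfolding periodic_def by blast
  then have d1: "d \<ge> 1" unfolding has_period_def by simp
  have "ereal (cex2 b c (-1 + int 6 * d)) = ereal (cex2 b c (-1))"
    using period_iter[OF d, of "-1" 6] by simp
  moreover have "cex2 b c (-1 + int 6 * d) = 2 * c"
  proof -
    have "(-1 + int 6 * d) mod 3 = 2" by presburger
    moreover have "-1 + int 6 * d \<notin> {-1,-2,-4}" using d1 by auto
    ultimately show ?thesis using cex2_far[of "-1 + int 6 * d" b c] by (simp add: qP_def)
  qed
  moreover have "cex2 b c (-1) = b" by (simp add: cex2_def)
  ultimately show False using b by simp
qed

lemma trop_seq_real: "trop_seq (\<lambda>j. ereal (z j))"
  unfolding trop_seq_def by simp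

theorem proposition2:
  fixes b c :: real
  assumes "b > 0" and "c > 0" and "b \<noteq> c"
  defines "a \<equiv> (\<lambda>i. [0, b, c, 0] ! i)"
  shows "((\<forall>y. trop_seq y \<and> satisfies a y \<and> minimal a y \<longrightarrow> periodic y)
            \<longleftrightarrow> ((b < c \<and> c \<le> 2 * b) \<or> (c < b \<and> b \<le> 2 * c)))
         \<and> (((b < c \<and> c \<le> 2 * b) \<or> (c < b \<and> b \<le> 2 * c)) \<longrightarrow>
            (\<forall>y. trop_seq y \<and> satisfies a y \<and> minimal a y \<longrightarrow> has_period y 3))"
proof -
  have aeq: "a = (\<lambda>i. [0, b, c, 0] ! i)" unfolding a_def by simp
  have H3: "has_period y 3" if bc: "b \<le> 2*c" "c \<le> 2*b" and y: "trop_seq y" "satisfies a y" "minimal a y" for y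
  proof -
    define z where "z j = real_of_ereal (y j)" for j
    have yz: "y = (\<lambda>j. ereal (z j))"
    proof
      fix j
      have "y j \<noteq> \<infinity>" using all_finite[OF y] .
      moreover have "y j \<noteq> -\<infinity>" using y(1) unfolding trop_seq_def by blast
      ultimately show "y j = ereal (z j)" unfolding z_def by (cases "y j") auto
    qed
    have W: "\<forall>k. zw a z k" using y(2) unfolding yz sat_iff .
    have M: "\<forall>j. zm a z j" using y(3) unfolding yz min_iff .
    have "z (k + 3) = z k" for k
      using per3[OF assms(1,2) bc aeq W M] .
    then show ?thesis unfolding has_period_def yz by simp
  qed
  have fwd: "(b < c \<and> c \<le> 2 * b) \<or> (c < b \<and> b \<le> 2 * c)"
    if P: "\<forall>y. trop_seq y \<and> satisfies a y \<and> minimal a y \<longrightarrow> periodic y"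
  proof (rule ccontr)
    assume "\<not> ?thesis"
    then have "c > 2*b \<or> b > 2*c" using assms(3) by linarith
    then show False
    proof
      assume c2: "c > 2*b"
      let ?y = "\<lambda>j. ereal (cex b c j)"
      have "satisfies a ?y" unfolding sat_iff using cex_win[OF assms(1) c2 aeq] by blast
      moreover have "minimal a ?y" unfolding min_iff using cex_min[OF assms(1) c2 aeq] by blast
      ultimately have "periodic ?y" using P trop_seq_real by blast
      then show False using cex_nonper[OF assms(1) c2] by blast
    next
      assume b2: "b > 2*c"
      let ?y = "\<lambda>j. ereal (cex2 b c j)"
      have "satisfies a ?y" unfolding sat_iff using cex2_win[OF assms(2) b2 aeq] by blast
      moreover have "minimal a ?y" unfolding min_iff using cex2_min[OF assms(2) b2 aeq] by blast
      ultimately have "periodic ?y" using P trop_seq_real by blast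
      then show False using cex2_nonper[OF assms(2) b2] by blast
    qed
  qed
  have bwd: "\<forall>y. trop_seq y \<and> satisfies a y \<and> minimal a y \<longrightarrow> has_period y 3"
    if "(b < c \<and> c \<le> 2 * b) \<or> (c < b \<and> b \<le> 2 * c)"
  proof -
    have "b \<le> 2*c" "c \<le> 2*b" using that by linarith+
    then show ?thesis using H3 by blast
  qed
  show ?thesis
    using fwd bwd unfolding periodic_def by blast
qed

end
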